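(* For every $n\ge 2$ and every Greene–Kleitman chain $C$ in $Q_n$ with $|C|\ge 2$, the chains $\ell( *C* )$ and $\ell( *f(C)* )$ are connected at their bottom ends in $Q_{n+2}$. Specifically, if $|C|=2$ and $C=u*v*w$ with $u,v,w\in D$, then $\ell( *C* )=*\,u\,*\,v\,0\,w\,1$ and $\ell( *f(C)* )=0\,u\,0\,v\,1\,w\,1$; and if $|C|\ge 3$ and $C=C'*u$ with $u\in D$ and $C'$ containing at least two $*$s, then $\ell( *C* )=*\,C'\,0\,u\,1$ and $\ell( *f(C)* )=*\,f(C')\,0\,u\,1$. Consequently, in the first case the chains $\ell( *C* )$ and $\ell( *f(C)* )$ differ in exactly three positions, and in the second case they differ in exactly two positions.
   Context: $Q_n$ is the hypercube on $\{0,1\}^n$. Let $D$ be the set of bitstrings (including the empty string) with equally many $0$s and $1$s such that every prefix has at least as many $0$s as $1$s. A Greene–Kleitman chain in $Q_n$ is a string of length $n$ over $\{0,1,*\}$ of the form $u_0*u_1*\cdots*u_{h-1}*u_h$ with all $u_j\in D$, representing the path whose vertices are obtained by replacing the $*$s by $i$ ones followed by $h-i$ zeros; $|C|=h$ is its number of $*$s, and its bottom end $b(C)$ is obtained by replacing all $*$s by $0$. For a string $C$ over $\{0,1,*\}$ with at least two $*$s, $f(C)$ (resp. $\ell(C)$) is obtained by replacing the first two (resp. last two) $*$s by $0$ and $1$, respectively. Juxtaposition denotes concatenation. Two chains are connected at their bottom ends if their bottom ends differ in exactly one position. *)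

theory Defs
  imports Main
begin

datatype sym = Zero | One | Star

definition cnt :: "sym \<Rightarrow> sym list \<Rightarrow> nat" where
  "cnt a xs = length (filter (\<lambda>x. x = a) xs)"

definition inD :: "sym list \<Rightarrow> bool" where
  "inD u \<longleftrightarrow> set u \<subseteq> {Zero, One} \<and> cnt Zero u = cnt One u \<and>
     (\<forall>k \<le> length u. cnt One (take k u) \<le> cnt Zero (take k u))"

fun join :: "sym list list \<Rightarrow> sym list" where
  "join [] = []"
| "join [u] = u"
| "join (u # us) = u @ Star # join us"

definition gk_chain :: "nat \<Rightarrow> sym list \<Rightarrow> bool" where
  "gk_chain n C \<longleftrightarrow> length C = n \<and> (\<exists>us. us \<noteq> [] \<and> (\<forall>u\<in>set us. inD u) \<and> C = join us)"

text \<open>Number of stars |C|.\<close>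
definition stars :: "sym list \<Rightarrow> nat" where
  "stars C = cnt Star C"

definition bot :: "sym list \<Rightarrow> sym list" where
  "bot C = map (\<lambda>x. if x = Star then Zero else x) C"

fun rep2 :: "sym \<Rightarrow> sym \<Rightarrow> nat \<Rightarrow> sym list \<Rightarrow> sym list" where
  "rep2 a b k [] = []"
| "rep2 a b k (x # xs) =
     (if x = Star \<and> k < 2 then (if k = 0 then a else b) # rep2 a b (Suc k) xs
      else x # rep2 a b k xs)"

definition fC :: "sym list \<Rightarrow> sym list" where
  "fC C = rep2 Zero One 0 C"

text \<open>l(C): replace the last two stars by 0 and 1, respectively (i.e. scanning from the
  right, the last star becomes 1 and the second-to-last becomes 0).\<close>
definition lC :: "sym list \<Rightarrow> sym list" where
  "lC C = rev (rep2 One Zero 0 (rev C))"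

definition ndiff :: "sym list \<Rightarrow> sym list \<Rightarrow> nat" where
  "ndiff x y = card {i. i < length x \<and> x ! i \<noteq> y ! i}"

definition connected_bot :: "sym list \<Rightarrow> sym list \<Rightarrow> bool" where
  "connected_bot C1 C2 \<longleftrightarrow> length C1 = length C2 \<and> ndiff (bot C1) (bot C2) = 1"

end

theory Submission
  imports Defs
begin

lemma cnt_Nil[simp]: "cnt a [] = 0" by (simp add: cnt_def)
lemma cnt_Cons[simp]: "cnt a (x # xs) = (if x = a then 1 else 0) + cnt a xs" by (simp add: cnt_def)
lemma cnt_append[simp]: "cnt a (xs @ ys) = cnt a xs + cnt a ys" by (simp add: cnt_def)
lemma cnt_rev[simp]: "cnt a (rev xs) = cnt a xs" by (simp add: cnt_def rev_filter[symmetric])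
lemma cnt_zero_iff: "cnt a xs = 0 \<longleftrightarrow> a \<notin> set xs" by (induction xs) auto

lemma inD_nostar: "inD u \<Longrightarrow> Star \<notin> set u" unfolding inD_def by auto

lemma inD_all: "inD u \<Longrightarrow> cnt One (take k u) \<le> cnt Zero (take k u)"
proof -
  assume a: "inD u"
  have "take k u = take (min k (length u)) u" by (simp add: min_def)
  then show ?thesis using a unfolding inD_def by (metis min.cobounded2)
qed

lemma inD_Nil[simp]: "inD []" unfolding inD_def by simp

lemma inD_append: assumes "inD u" "inD v" shows "inD (u @ v)"
proof -
  have "cnt One (take k (u @ v)) \<le> cnt Zero (take k (u @ v))" for k
  proof (cases "k \<le> length u")
    case True then show ?thesis using inD_all[OF assms(1), of k] by simp
  next
    case False then show ?thesis using inD_all[OF assms(2), of "k - length u"] assms(1)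
      unfolding inD_def by simp
  qed
  then show ?thesis using assms unfolding inD_def by auto
qed

lemma inD_wrap: assumes "inD u" shows "inD (Zero # u @ [One])"
proof -
  have "cnt One (take k (Zero # u @ [One])) \<le> cnt Zero (take k (Zero # u @ [One]))" for k
  proof (cases k)
    case 0 then show ?thesis by simp
  next
    case (Suc j)
    have "cnt One (take (j - length u) [One]) \<le> 1" by (cases "j - length u") auto
    then show ?thesis using Suc inD_all[OF assms, of j] by simp
  qed
  then show ?thesis using assms unfolding inD_def by auto
qed

lemma rep2_len[simp]: "length (rep2 a b k xs) = length xs"
  by (induction xs arbitrary: k) auto

lemma rep2_nostar: "Star \<notin> set xs \<Longrightarrow> rep2 a b k xs = xs"
  by (induction xs arbitrary: k) auto

lemma rep2_ge2: "k \<ge> 2 \<Longrightarrow> rep2 a b k xs = xs"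
  by (induction xs arbitrary: k) auto

lemma rep2_append: "rep2 a b k (xs @ ys) = rep2 a b k xs @ rep2 a b (if k \<ge> 2 then k else min 2 (k + cnt Star xs)) ys"
proof (induction xs arbitrary: k)
  case Nil then show ?case by simp
next
  case (Cons x xs) then show ?case by (auto simp: rep2_ge2)
qed

lemma rep2_fC2: "cnt Star xs \<ge> 2 \<Longrightarrow> fC (xs @ ys) = fC xs @ ys"
  unfolding fC_def by (simp add: rep2_append rep2_ge2)

lemma fC_uvw: "Star \<notin> set u \<Longrightarrow> Star \<notin> set v \<Longrightarrow> fC (u @ Star # v @ Star # w) = u @ Zero # v @ One # w"
  unfolding fC_def by (simp add: rep2_append rep2_nostar rep2_ge2 cnt_zero_iff[symmetric])

lemma lC1: "Star \<notin> set u \<Longrightarrow> lC (X @ Star # u @ [Star]) = X @ Zero # u @ [One]"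
  unfolding lC_def by (simp add: rep2_append rep2_nostar rep2_ge2 cnt_zero_iff[symmetric])

lemma lC2: "Star \<notin> set X \<Longrightarrow> lC (Star # X @ [Star]) = Zero # X @ [One]"
  unfolding lC_def by (simp add: rep2_append rep2_nostar rep2_ge2 cnt_zero_iff[symmetric])

lemma ndiff_Nil[simp]: "ndiff [] ys = 0" by (simp add: ndiff_def)

lemma ndiff_Cons[simp]: "ndiff (x # xs) (y # ys) = (if x = y then 0 else 1) + ndiff xs ys"
proof -
  have e: "{i. i < length (x # xs) \<and> (x # xs) ! i \<noteq> (y # ys) ! i} =
     (if x = y then {} else {0}) \<union> Suc ` {i. i < length xs \<and> xs ! i \<noteq> ys ! i}"
    apply (rule set_eqI)
    subgoal for i by (cases i) auto
    done
  have f: "finite {i. i < length xs \<and> xs ! i \<noteq> ys ! i}" by simp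
  show ?thesis unfolding ndiff_def e using f
    by (simp add: card_image inj_on_def)
qed

lemma ndiff_append: "length xs = length xs' \<Longrightarrow> ndiff (xs @ ys) (xs' @ ys') = ndiff xs xs' + ndiff ys ys'"
proof (induction xs arbitrary: xs')
  case Nil then show ?case by simp
next
  case (Cons x xs) then show ?case by (cases xs') auto
qed

lemma ndiff_same[simp]: "ndiff xs xs = 0" by (induction xs) auto

lemma bot_simps[simp]: "bot [] = []" "bot (x # xs) = (if x = Star then Zero else x) # bot xs"
  "bot (xs @ ys) = bot xs @ bot ys" "length (bot xs) = length xs" by (auto simp: bot_def)

lemma ndiff_rep2: "k \<le> 2 \<Longrightarrow> a \<noteq> Star \<Longrightarrow> b \<noteq> Star \<Longrightarrow> ndiff xs (rep2 a b k xs) = min (2 - k) (cnt Star xs)"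
proof (induction xs arbitrary: k)
  case Nil then show ?case by simp
next
  case (Cons x xs) then show ?case by (auto simp: rep2_ge2)
qed

lemma ndiff_bot_rep2: "k \<le> 2 \<Longrightarrow> ndiff (bot xs) (bot (rep2 Zero One k xs)) = (if k \<le> 1 \<and> k + cnt Star xs \<ge> 2 then 1 else 0)"
proof (induction xs arbitrary: k)
  case Nil then show ?case by simp
next
  case (Cons x xs) then show ?case by (auto simp: rep2_ge2)
qed


lemma join_Cons2: "xs \<noteq> [] \<Longrightarrow> join (x # xs) = x @ Star # join xs"
  by (cases xs) auto

lemma join_snoc: "xs \<noteq> [] \<Longrightarrow> join (xs @ [y]) = join xs @ Star # y"
proof (induction xs rule: join.induct)
  case 1 then show ?case by simp
next
  case (2 u) then show ?case by simp
next
  case (3 u v vs) then show ?case by simp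
qed

lemma join_app_end: "xs \<noteq> [] \<Longrightarrow> join xs @ Y = join (butlast xs @ [last xs @ Y])"
proof (induction xs rule: join.induct)
  case 1 then show ?case by simp
next
  case (2 u) then show ?case by simp
next
  case (3 u v vs) then show ?case by (auto simp: join_Cons2)
qed

lemma stars_join: "\<forall>w\<in>set ws. Star \<notin> set w \<Longrightarrow> cnt Star (join ws) = length ws - 1"
proof (induction ws rule: join.induct)
  case 1 then show ?case by simp
next
  case (2 u) then show ?case by (simp add: cnt_zero_iff)
next
  case (3 u v vs) then show ?case by (simp add: cnt_zero_iff)
qed

lemma G: assumes "\<forall>w\<in>set ws. inD w" "ws \<noteq> []"
  shows "gk_chain (length (join ws) + 2) (lC (Star # join ws @ [Star]))"
proof (cases ws rule: rev_cases)
  case Nil then show ?thesis using assms by simp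
next
  case (snoc ws0 w)
  have w: "inD w" "Star \<notin> set w" using assms snoc inD_nostar by auto
  show ?thesis
  proof (cases "ws0 = []")
    case True
    then have "lC (Star # join ws @ [Star]) = join [Zero # w @ [One]]"
      using snoc w by (simp add: lC2)
    moreover have "length (lC (Star # join ws @ [Star])) = length (join ws) + 2" by (simp add: lC_def)
    ultimately show ?thesis unfolding gk_chain_def using w inD_wrap
      by (metis empty_iff list.distinct(1) list.set(1) set_ConsD)
  next
    case False
    have "lC (Star # join ws @ [Star]) = Star # join ws0 @ Zero # w @ [One]"
      using snoc w False lC1[of w "Star # join ws0"] by (simp add: join_snoc)
    also have "\<dots> = join ([] # butlast ws0 @ [last ws0 @ Zero # w @ [One]])"
      using False by (simp add: join_app_end join_Cons2)
    finally have e: "lC (Star # join ws @ [Star]) = join ([] # butlast ws0 @ [last ws0 @ Zero # w @ [One]])" .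
    have "inD (last ws0 @ Zero # w @ [One])"
      using inD_append[OF _ inD_wrap[OF w(1)]] assms snoc False by simp
    moreover have "\<forall>x\<in>set (butlast ws0). inD x" using assms snoc by (auto dest: in_set_butlastD)
    ultimately have "\<exists>us. us \<noteq> [] \<and> (\<forall>x\<in>set us. inD x) \<and> lC (Star # join ws @ [Star]) = join us"
      unfolding e by (intro exI[of _ "[] # butlast ws0 @ [last ws0 @ Zero # w @ [One]]"]) auto
    moreover have "length (lC (Star # join ws @ [Star])) = length (join ws) + 2" by (simp add: lC_def)
    ultimately show ?thesis unfolding gk_chain_def by blast
  qed
qed

lemma case2:
  assumes "inD u" "inD v" "inD w" "C = u @ Star # v @ Star # w"
  shows "lC (Star # C @ [Star]) = Star # u @ Star # v @ Zero # w @ [One]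
          \<and> lC (Star # fC C @ [Star]) = Zero # u @ Zero # v @ One # w @ [One]
          \<and> ndiff (lC (Star # C @ [Star])) (lC (Star # fC C @ [Star])) = 3
          \<and> connected_bot (lC (Star # C @ [Star])) (lC (Star # fC C @ [Star]))"
proof -
  have s: "Star \<notin> set u" "Star \<notin> set v" "Star \<notin> set w" using assms inD_nostar by auto
  have 1: "lC (Star # C @ [Star]) = Star # u @ Star # v @ Zero # w @ [One]"
    using lC1[OF s(3), of "Star # u @ Star # v"] assms(4) by simp
  have 2: "lC (Star # fC C @ [Star]) = Zero # u @ Zero # v @ One # w @ [One]"
    using lC2[of "u @ Zero # v @ One # w"] s assms(4) by (simp add: fC_uvw)
  show ?thesis unfolding 1 2 connected_bot_def by (simp add: ndiff_append)
qed

lemma case3: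
  assumes "cnt Star C' \<ge> 2" "inD u" "C = C' @ Star # u"
  shows "lC (Star # C @ [Star]) = Star # C' @ Zero # u @ [One]
          \<and> lC (Star # fC C @ [Star]) = Star # fC C' @ Zero # u @ [One]
          \<and> ndiff (lC (Star # C @ [Star])) (lC (Star # fC C @ [Star])) = 2
          \<and> connected_bot (lC (Star # C @ [Star])) (lC (Star # fC C @ [Star]))"
proof -
  have s: "Star \<notin> set u" using assms inD_nostar by auto
  have 1: "lC (Star # C @ [Star]) = Star # C' @ Zero # u @ [One]"
    using lC1[OF s, of "Star # C'"] assms(3) by simp
  have 2: "lC (Star # fC C @ [Star]) = Star # fC C' @ Zero # u @ [One]"
    using lC1[OF s, of "Star # fC C'"] assms rep2_fC2[OF assms(1), of "Star # u"] by simp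
  have n1: "ndiff C' (fC C') = 2" using ndiff_rep2[of 0 Zero One C'] assms(1) by (simp add: fC_def)
  have n2: "ndiff (bot C') (bot (fC C')) = 1" using ndiff_bot_rep2[of 0 C'] assms(1) by (simp add: fC_def)
  show ?thesis unfolding 1 2 connected_bot_def using n1 n2 by (simp add: ndiff_append fC_def)
qed

theorem lemma20:
  fixes n :: nat and C :: "sym list"
  assumes "n \<ge> 2" and "gk_chain n C" and "stars C \<ge> 2"
  shows "gk_chain (n + 2) (lC (Star # C @ [Star])) \<and> gk_chain (n + 2) (lC (Star # fC C @ [Star]))
       \<and> connected_bot (lC (Star # C @ [Star])) (lC (Star # fC C @ [Star]))
       \<and> (\<forall>u v w. stars C = 2 \<longrightarrow> inD u \<longrightarrow> inD v \<longrightarrow> inD w \<longrightarrow> C = u @ Star # v @ Star # w \<longrightarrow>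
            lC (Star # C @ [Star]) = Star # u @ Star # v @ Zero # w @ [One]
          \<and> lC (Star # fC C @ [Star]) = Zero # u @ Zero # v @ One # w @ [One]
          \<and> ndiff (lC (Star # C @ [Star])) (lC (Star # fC C @ [Star])) = 3)
       \<and> (\<forall>C' u. stars C \<ge> 3 \<longrightarrow> inD u \<longrightarrow> stars C' \<ge> 2 \<longrightarrow> C = C' @ Star # u \<longrightarrow>
            lC (Star # C @ [Star]) = Star # C' @ Zero # u @ [One]
          \<and> lC (Star # fC C @ [Star]) = Star # fC C' @ Zero # u @ [One]
          \<and> ndiff (lC (Star # C @ [Star])) (lC (Star # fC C @ [Star])) = 2)"
proof -
  obtain us where us: "us \<noteq> []" "\<forall>u\<in>set us. inD u" "C = join us" "length C = n"
    using assms(2) unfolding gk_chain_def by blast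
  have nst: "\<forall>u\<in>set us. Star \<notin> set u" using us(2) inD_nostar by blast
  have sC: "stars C = length us - 1" using stars_join[OF nst] us(3) by (simp add: stars_def)
  then have "length us \<ge> 3" using assms(3) by simp
  then obtain a b c rest where abc: "us = a # b # c # rest"
    by (metis Suc_le_length_iff numeral_3_eq_3)
  have iabc: "inD a" "inD b" "inD c" "\<forall>x\<in>set rest. inD x" using us(2) abc by auto
  have P1: "gk_chain (n + 2) (lC (Star # C @ [Star]))" using G[OF us(2) us(1)] us by simp
  define T where "T = (if rest = [] then [] else Star # join rest)"
  have jc: "join (c # rest) = c @ T" "join ((a @ Zero # b @ One # c) # rest) = (a @ Zero # b @ One # c) @ T"
    unfolding T_def by (auto simp: join_Cons2)
  have Ceq: "C = a @ Star # b @ Star # c @ T" using us(3) abc jc(1) by simp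
  have fCeq: "fC C = join ((a @ Zero # b @ One # c) # rest)"
    unfolding Ceq jc(2) using fC_uvw[of a b "c @ T"] iabc inD_nostar by simp
  have "inD (a @ Zero # b @ One # c)"
    using inD_append[OF iabc(1) inD_append[OF inD_wrap[OF iabc(2)] iabc(3)]] by simp
  then have "gk_chain (length (fC C) + 2) (lC (Star # fC C @ [Star]))"
    unfolding fCeq using G[of "(a @ Zero # b @ One # c) # rest"] iabc(4) by simp
  then have P2: "gk_chain (n + 2) (lC (Star # fC C @ [Star]))" using us(4) by (simp add: fC_def)
  have P3: "connected_bot (lC (Star # C @ [Star])) (lC (Star # fC C @ [Star]))"
  proof (cases "rest = []")
    case True
    then have "C = a @ Star # b @ Star # c" using Ceq T_def by simp
    then show ?thesis using case2[OF iabc(1-3)] by blast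
  next
    case False
    define us0 where "us0 = butlast us"
    define u where "u = last us"
    have uu: "us = us0 @ [u]" unfolding us0_def u_def using us(1) by simp
    have ne: "us0 \<noteq> []" using abc uu by (cases us0) auto
    have C2: "C = join us0 @ Star # u" using us(3) uu join_snoc[OF ne] by simp
    have "cnt Star (join us0) = length us0 - 1"
      using stars_join[of us0] nst uu by simp
    moreover have "length us0 \<ge> 3" proof -
      have "length us = length us0 + 1" using uu by simp
      moreover have "length us \<ge> 4" using abc False by (cases rest) auto
      ultimately show ?thesis by simp
    qed
    ultimately have "cnt Star (join us0) \<ge> 2" by simp
    moreover have "inD u" using us(2) uu by simp
    ultimately show ?thesis using case3 C2 by blast
  qed
  show ?thesis
    using P1 P2 P3 case2 case3 unfolding stars_def by blast
qed

end
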